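(* Let $X=\{x_1,\dots,x_M\}\subset\mathbb{R}^n$ be finite and $\phi_1,\dots,\phi_N$ real functions on $X$ such that $V$, $V_{i,j}=\phi_j(x_i)$, has rank $N$. Let $(\eta_n)_{n\in\mathbb{N}}$ be a sequence of positive numbers decreasing to $0$. Then for every $n$ there exists a unique minimizer $w_n^*$ of $E_{\eta_n}$ on $\mathbb{R}^M_{\geq0}$, and the sequence $(w_n^* )$ converges to the optimal design $\hat w^*$, namely the element of $S$ satisfying $\|\pi_K\hat w^*\|_2^2=\min\{\|\pi_Kw^*\|_2^2:w^*\in S\}$.
   Context: $G(w)=V^t\operatorname{diag}(w)V$; $E(w)=-\frac1N\log\det G(w)+\|w\|_1$ (with $E=+\infty$ where $\det G(w)=0$). $S$ denotes the set of minimizers of $E$ over $\mathbb{R}^M_{\geq0}$. $K=\{u\in\mathbb{R}^M:\sum_{i=1}^Mu_i\phi_h(x_i)\phi_k(x_i)=0\ \forall h,k=1,\dots,N\}$ (the kernel of $V(\Phi^2;X)^t$), and $\pi_K$ is the orthogonal projection of $\mathbb{R}^M$ onto $K$. For $\eta>0$, $E_\eta(w)=E(w)+\eta\|\pi_Kw\|_2^2$. *)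

theory Defs
  imports "HOL-Analysis.Analysis" "HOL-Library.Extended_Real"
begin

definition design_matrix :: "('M \<Rightarrow> 'a) \<Rightarrow> ('N \<Rightarrow> 'a \<Rightarrow> real) \<Rightarrow> real^'N^'M" where
  "design_matrix x \<phi> = (\<chi> i j. \<phi> j (x i))"

definition diag_mat :: "real^'M \<Rightarrow> real^'M^'M" where
  "diag_mat w = (\<chi> i j. if i = j then w $ i else 0)"

definition Gmat :: "real^'N^'M \<Rightarrow> real^'M \<Rightarrow> real^'N^'N" where
  "Gmat V w = transpose V ** diag_mat w ** V"

definition norm1 :: "real^'M \<Rightarrow> real" where
  "norm1 w = (\<Sum>i\<in>UNIV. \<bar>w $ i\<bar>)"

text \<open>E(w) = -(1/N) log det G(w) + ||w||_1, and +infinity where det G(w) = 0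
  (on the nonnegative orthant det G(w) >= 0, so det G(w) <= 0 is the same as = 0 there).\<close>
definition Efun :: "real^'N^'M \<Rightarrow> real^'M \<Rightarrow> ereal" where
  "Efun V w = (if det (Gmat V w) \<le> 0 then \<infinity>
      else ereal (- (1 / real CARD('N)) * ln (det (Gmat V w)) + norm1 w))"

definition nonneg_orthant :: "(real^'M) set" where
  "nonneg_orthant = {w. \<forall>i. 0 \<le> w $ i}"

definition is_minimizer_on :: "('b \<Rightarrow> ereal) \<Rightarrow> 'b set \<Rightarrow> 'b \<Rightarrow> bool" where
  "is_minimizer_on f A w \<longleftrightarrow> w \<in> A \<and> (\<forall>v\<in>A. f w \<le> f v)"

definition Sset :: "real^'N^'M \<Rightarrow> (real^'M) set" where
  "Sset V = {w. is_minimizer_on (Efun V) nonneg_orthant w}"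

text \<open>K: kernel of V(Phi^2;X)^t, i.e. all u with sum_i u_i phi_h(x_i) phi_k(x_i) = 0 for all h,k.\<close>
definition Kspace :: "real^'N^'M \<Rightarrow> (real^'M) set" where
  "Kspace V = {u. \<forall>h k. (\<Sum>i\<in>UNIV. u $ i * V $ i $ h * V $ i $ k) = 0}"

definition orth_proj :: "'a::real_inner set \<Rightarrow> 'a \<Rightarrow> 'a" where
  "orth_proj L w = (THE p. p \<in> L \<and> (\<forall>u\<in>L. inner (w - p) u = 0))"

definition Eeta :: "real^'N^'M \<Rightarrow> real \<Rightarrow> real^'M \<Rightarrow> ereal" where
  "Eeta V \<eta> w = Efun V w + ereal (\<eta> * (norm (orth_proj (Kspace V) w))\<^sup>2)"

end

theory Submission
  imports Defs
begin


lemma inner_sym_mat: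
  fixes A :: "real^'n^'n"
  assumes "transpose A = A"
  shows "x \<bullet> (A *v y) = y \<bullet> (A *v x)"
  by (metis assms dot_lmul_matrix inner_commute vector_transpose_matrix)

lemma quad_expand:
  fixes A :: "real^'n^'n"
  assumes "transpose A = A"
  shows "(p + t *\<^sub>R u) \<bullet> (A *v (p + t *\<^sub>R u)) = p \<bullet> (A *v p) + 2 * t * (p \<bullet> (A *v u)) + t^2 * (u \<bullet> (A *v u))"
proof -
  have "u \<bullet> (A *v p) = p \<bullet> (A *v u)" using inner_sym_mat[OF assms] by simp
  then show ?thesis
    by (simp add: matrix_vector_right_distrib matrix_vector_mult_scaleR inner_add_left inner_add_right
        algebra_simps power2_eq_square)
qed

lemma lin_quad_zero:
  fixes a c :: real
  assumes "\<And>t. 2 * t * a + t^2 * c \<le> 0"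
  shows "a = 0"
proof (rule ccontr)
  assume "a \<noteq> 0"
  define t where "t = a / (\<bar>c\<bar> + 1)"
  have pos: "\<bar>c\<bar> + 1 > 0" by simp
  have e1: "2 * t * a = a^2 / (\<bar>c\<bar> + 1) * 2" unfolding t_def by (simp add: power2_eq_square)
  have e2: "t^2 * c = a^2 / (\<bar>c\<bar> + 1) * (c / (\<bar>c\<bar> + 1))" unfolding t_def by (simp add: power2_eq_square)
  have eq: "2 * t * a + t^2 * c = a^2 / (\<bar>c\<bar> + 1) * (2 + c / (\<bar>c\<bar> + 1))"
    unfolding e1 e2 by (simp only: distrib_left)
  have "c / (\<bar>c\<bar> + 1) > -1" using pos by (simp add: field_simps)
  then have h3: "2 + c / (\<bar>c\<bar> + 1) > 0" by linarith
  have "a^2 / (\<bar>c\<bar> + 1) > 0" using \<open>a \<noteq> 0\<close> pos by simp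
  from mult_pos_pos[OF this h3] have "2 * t * a + t^2 * c > 0" using eq by linarith
  with assms[of t] show False by simp
qed

lemma gen_eig_step:
  fixes A B :: "real^'n^'n"
  assumes symA: "transpose A = A" and symB: "transpose B = B"
    and pdA: "\<And>x. x \<noteq> 0 \<Longrightarrow> x \<bullet> (A *v x) > 0"
    and U: "subspace U" "U \<noteq> {0}"
  shows "\<exists>p \<mu>. p \<in> U \<and> p \<bullet> (A *v p) = 1 \<and> (\<forall>u\<in>U. p \<bullet> (B *v u) = \<mu> * (p \<bullet> (A *v u)))"
proof -
  define R where "R x = (x \<bullet> (B *v x)) / (x \<bullet> (A *v x))" for x
  define S where "S = U \<inter> sphere 0 1"
  have "compact S" unfolding S_def
    by (rule closed_Int_compact[OF closed_subspace[OF U(1)] compact_sphere])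
  moreover obtain y where y: "y \<in> U" "y \<noteq> 0" using U subspace_0 by auto
  then have "y /\<^sub>R norm y \<in> S" unfolding S_def using U(1)
    by (simp add: subspace_mul)
  then have "S \<noteq> {}" by auto
  moreover have "continuous_on S R"
    unfolding R_def
  proof (intro continuous_intros ballI)
    fix x assume "x \<in> S"
    then have "x \<noteq> 0" unfolding S_def by auto
    then show "x \<bullet> (A *v x) \<noteq> 0" using pdA by (metis less_irrefl)
  qed
  ultimately obtain x0 where x0: "x0 \<in> S" "\<And>z. z \<in> S \<Longrightarrow> R z \<le> R x0"
    using continuous_attains_sup by metis
  define \<mu> where "\<mu> = R x0"
  have x0U: "x0 \<in> U" "x0 \<noteq> 0" using x0(1) unfolding S_def by auto
  have Rhom: "R (c *\<^sub>R z) = R z" if "c \<noteq> 0" for c z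
    unfolding R_def using that
    by (simp add: matrix_vector_mult_scaleR power2_eq_square)
  have bound: "z \<bullet> (B *v z) \<le> \<mu> * (z \<bullet> (A *v z))" if "z \<in> U" for z
  proof (cases "z = 0")
    case True then show ?thesis by simp
  next
    case False
    have "z /\<^sub>R norm z \<in> S" unfolding S_def using U(1) that False
      by (simp add: subspace_mul)
    then have "R (z /\<^sub>R norm z) \<le> \<mu>" using x0 \<mu>_def by auto
    then have "R z \<le> \<mu>" using Rhom[of "inverse (norm z)" z] False by simp
    moreover have "z \<bullet> (A *v z) > 0" using pdA False by simp
    ultimately show ?thesis unfolding R_def by (simp add: divide_le_eq)
  qed
  define a0 where "a0 = x0 \<bullet> (A *v x0)"
  have a0: "a0 > 0" using pdA x0U unfolding a0_def by simp
  define p where "p = inverse (sqrt a0) *\<^sub>R x0"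
  have pU: "p \<in> U" unfolding p_def using U(1) x0U by (simp add: subspace_mul)
  have pA: "p \<bullet> (A *v p) = 1" unfolding p_def using a0
    by (simp add: matrix_vector_mult_scaleR a0_def[symmetric] power2_eq_square field_simps)
  have pB: "p \<bullet> (B *v p) = \<mu>"
  proof -
    have "R p = \<mu>" unfolding p_def \<mu>_def using a0 Rhom by simp
    then show ?thesis using pA unfolding R_def by simp
  qed
  have "p \<bullet> (B *v u) = \<mu> * (p \<bullet> (A *v u))" if uU: "u \<in> U" for u
  proof -
    have "2 * t * (p \<bullet> (B *v u) - \<mu> * (p \<bullet> (A *v u))) + t^2 * (u \<bullet> (B *v u) - \<mu> * (u \<bullet> (A *v u))) \<le> 0" for t
    proof -
      have "p + t *\<^sub>R u \<in> U" using U(1) pU uU by (simp add: subspace_add subspace_mul)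
      from bound[OF this] show ?thesis
        unfolding quad_expand[OF symA] quad_expand[OF symB] pA pB
        by (simp add: algebra_simps)
    qed
    from lin_quad_zero[OF this] show ?thesis by simp
  qed
  with pU pA show ?thesis by blast
qed

lemma gen_eig_set:
  fixes A B :: "real^'n^'n"
  assumes symA: "transpose A = A" and symB: "transpose B = B"
    and pdA: "\<And>x. x \<noteq> 0 \<Longrightarrow> x \<bullet> (A *v x) > 0"
  shows "k \<le> CARD('n) \<Longrightarrow> \<exists>P. finite P \<and> card P = k \<and> (\<forall>p\<in>P. p \<bullet> (A *v p) = 1)
     \<and> (\<forall>p\<in>P. \<forall>q\<in>P. p \<noteq> q \<longrightarrow> p \<bullet> (A *v q) = 0 \<and> p \<bullet> (B *v q) = 0)
     \<and> (\<forall>q\<in>P. \<forall>u. (\<forall>p\<in>P. p \<bullet> (A *v u) = 0) \<longrightarrow> q \<bullet> (B *v u) = 0)"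
proof (induction k)
  case 0 show ?case by (intro exI[of _ "{}"]) auto
next
  case (Suc k)
  then obtain P where fin: "finite P" and cardP: "card P = k" and nA: "\<forall>p\<in>P. p \<bullet> (A *v p) = 1"
     and orth: "\<forall>p\<in>P. \<forall>q\<in>P. p \<noteq> q \<longrightarrow> p \<bullet> (A *v q) = 0 \<and> p \<bullet> (B *v q) = 0"
     and inv: "\<forall>q\<in>P. \<forall>u. (\<forall>p\<in>P. p \<bullet> (A *v u) = 0) \<longrightarrow> q \<bullet> (B *v u) = 0"
    by auto
  define U where "U = {u. \<forall>p\<in>P. p \<bullet> (A *v u) = 0}"
  have subU: "subspace U" unfolding U_def subspace_def
    by (auto simp: matrix_vector_right_distrib matrix_vector_mult_scaleR inner_add_right)
  have "dim ((\<lambda>p. A *v p) ` P) \<le> card ((\<lambda>p. A *v p) ` P)"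
    using fin by (simp add: dim_le_card')
  also have "\<dots> \<le> card P" using fin by (rule card_image_le)
  also have "\<dots> < DIM(real^'n)" using Suc.prems cardP by simp
  finally obtain x where x: "x \<noteq> 0" "\<And>y. y \<in> span ((\<lambda>p. A *v p) ` P) \<Longrightarrow> orthogonal x y"
    using orthogonal_to_subspace_exists by blast
  have "x \<in> U" unfolding U_def
  proof (unfold mem_Collect_eq, intro ballI)
    fix p assume "p \<in> P"
    then have "orthogonal x (A *v p)" using x(2) by (simp add: span_base)
    then show "p \<bullet> (A *v x) = 0" using inner_sym_mat[OF symA]
      by (simp add: orthogonal_def)
  qed
  then have "U \<noteq> {0}" using x by auto
  from gen_eig_step[OF symA symB pdA subU this] obtain p \<mu> where
    pU: "p \<in> U" and pA: "p \<bullet> (A *v p) = 1" and pe: "\<forall>u\<in>U. p \<bullet> (B *v u) = \<mu> * (p \<bullet> (A *v u))"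
    by blast
  have pnP: "p \<notin> P" using pU pA unfolding U_def by auto
  have qAp: "q \<bullet> (A *v p) = 0" "p \<bullet> (A *v q) = 0" if "q \<in> P" for q
    using pU that inner_sym_mat[OF symA, of p q] unfolding U_def by auto
  have qBp: "q \<bullet> (B *v p) = 0" "p \<bullet> (B *v q) = 0" if "q \<in> P" for q
    using inv pU that inner_sym_mat[OF symB, of p q] unfolding U_def by auto
  show ?case
  proof (intro exI[of _ "insert p P"] conjI)
    show "finite (insert p P)" using fin by simp
    show "card (insert p P) = Suc k" using fin pnP cardP by simp
    show "\<forall>q\<in>insert p P. q \<bullet> (A *v q) = 1" using nA pA by auto
    show "\<forall>pa\<in>insert p P. \<forall>q\<in>insert p P. pa \<noteq> q \<longrightarrow> pa \<bullet> (A *v q) = 0 \<and> pa \<bullet> (B *v q) = 0"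
      using orth qAp qBp by auto
    show "\<forall>q\<in>insert p P. \<forall>u. (\<forall>pa\<in>insert p P. pa \<bullet> (A *v u) = 0) \<longrightarrow> q \<bullet> (B *v u) = 0"
    proof (intro ballI allI impI)
      fix q u assume q: "q \<in> insert p P" and u: "\<forall>pa\<in>insert p P. pa \<bullet> (A *v u) = 0"
      then have "u \<in> U" unfolding U_def by auto
      show "q \<bullet> (B *v u) = 0"
      proof (cases "q = p")
        case True then show ?thesis using pe \<open>u \<in> U\<close> u by auto
      next
        case False then show ?thesis using inv q u by auto
      qed
    qed
  qed
qed

lemma congr_entry:
  fixes M :: "real^'n^'n" and f :: "'n \<Rightarrow> real^'n"
  defines "Q \<equiv> (\<chi> a b. f b $ a)"
  shows "(transpose Q ** M ** Q) $ i $ j = f i \<bullet> (M *v f j)"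
proof -
  have "(transpose Q ** M ** Q) $ i $ j = (\<Sum>k\<in>UNIV. (\<Sum>l\<in>UNIV. f i $ l * M $ l $ k) * f j $ k)"
    unfolding Q_def by (simp add: matrix_matrix_mult_def transpose_def)
  also have "\<dots> = (\<Sum>k\<in>UNIV. \<Sum>l\<in>UNIV. f i $ l * (M $ l $ k * f j $ k))"
    by (simp add: sum_distrib_right mult.assoc)
  also have "\<dots> = (\<Sum>l\<in>UNIV. \<Sum>k\<in>UNIV. f i $ l * (M $ l $ k * f j $ k))"
    by (rule sum.swap)
  also have "\<dots> = f i \<bullet> (M *v f j)"
    by (simp add: matrix_vector_mult_def inner_vec_def sum_distrib_left)
  finally show ?thesis .
qed

lemma cancel_congr:
  fixes Q A B :: "real^'n^'n"
  assumes "det Q \<noteq> 0" "transpose Q ** A ** Q = transpose Q ** B ** Q"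
  shows "A = B"
proof -
  obtain Q' where Q': "Q ** Q' = mat 1" "Q' ** Q = mat 1"
    using assms(1) invertible_det_nz invertible_def by metis
  have "det (transpose Q) \<noteq> 0" using assms(1) by simp
  then obtain T' where T': "transpose Q ** T' = mat 1" "T' ** transpose Q = mat 1"
    using invertible_det_nz invertible_def by metis
  have e: "T' ** (transpose Q ** C ** Q) ** Q' = (T' ** transpose Q) ** C ** (Q ** Q')" for C
    by (simp add: matrix_mul_assoc)
  have "A = T' ** (transpose Q ** A ** Q) ** Q'"
    unfolding e T' Q' by (simp add: matrix_mul_lid matrix_mul_rid)
  also have "\<dots> = T' ** (transpose Q ** B ** Q) ** Q'" using assms(2) by simp
  also have "\<dots> = B"
    unfolding e T' Q' by (simp add: matrix_mul_lid matrix_mul_rid)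
  finally show ?thesis .
qed

lemma simdiag:
  fixes A B :: "real^'n^'n"
  assumes symA: "transpose A = A" and symB: "transpose B = B"
    and pdA: "\<And>x. x \<noteq> 0 \<Longrightarrow> x \<bullet> (A *v x) > 0"
    and pdB: "\<And>x. x \<noteq> 0 \<Longrightarrow> x \<bullet> (B *v x) > 0"
  shows "\<exists>f::'n \<Rightarrow> real^'n. (\<forall>i j. f i \<bullet> (A *v f j) = (if i = j then 1 else 0))
     \<and> (\<forall>i j. i \<noteq> j \<longrightarrow> f i \<bullet> (B *v f j) = 0) \<and> (\<forall>i. f i \<bullet> (B *v f i) > 0)"
proof -
  obtain P where fin: "finite P" and cardP: "card P = CARD('n)" and nA: "\<forall>p\<in>P. p \<bullet> (A *v p) = 1"
     and orth: "\<forall>p\<in>P. \<forall>q\<in>P. p \<noteq> q \<longrightarrow> p \<bullet> (A *v q) = 0 \<and> p \<bullet> (B *v q) = 0"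
    using gen_eig_set[OF symA symB pdA, of "CARD('n)"] by auto
  obtain f where f: "bij_betw f (UNIV::'n set) P"
    using finite_same_card_bij[OF finite fin] cardP by auto
  have fP: "f i \<in> P" for i using f bij_betwE by blast
  have finj: "f i = f j \<longleftrightarrow> i = j" for i j using f unfolding bij_betw_def inj_on_def by auto
  show ?thesis
  proof (intro exI[of _ f] conjI allI impI)
    fix i j :: 'n show "f i \<bullet> (A *v f j) = (if i = j then 1 else 0)"
      using nA orth fP finj by auto
  next
    fix i j :: 'n assume "i \<noteq> j" then show "f i \<bullet> (B *v f j) = 0"
      using orth fP finj by auto
  next
    fix i :: 'n
    have "f i \<noteq> 0" using nA fP[of i] by auto
    then show "f i \<bullet> (B *v f i) > 0" using pdB by simp
  qed
qed

lemma det_congr: "det (transpose Q ** X ** Q) = (det Q)^2 * det (X::real^'n^'n)"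
  by (simp add: det_mul power2_eq_square)

lemma det_midpoint:
  fixes A B :: "real^'n^'n"
  assumes symA: "transpose A = A" and symB: "transpose B = B"
    and pdA: "\<And>x. x \<noteq> 0 \<Longrightarrow> x \<bullet> (A *v x) > 0"
    and pdB: "\<And>x. x \<noteq> 0 \<Longrightarrow> x \<bullet> (B *v x) > 0"
  shows "det A > 0" "det A * det B \<le> (det ((1/2) *\<^sub>R (A + B)))^2"
     "A \<noteq> B \<Longrightarrow> det A * det B < (det ((1/2) *\<^sub>R (A + B)))^2"
proof -
  obtain f :: "'n \<Rightarrow> real^'n" where fA: "\<And>i j. f i \<bullet> (A *v f j) = (if i = j then 1 else 0)"
     and fB: "\<And>i j. i \<noteq> j \<Longrightarrow> f i \<bullet> (B *v f j) = 0" and fBp: "\<And>i. f i \<bullet> (B *v f i) > 0"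
    using simdiag[OF symA symB pdA pdB] by blast
  define Q where "Q = (\<chi> a b. f b $ a)"
  define \<mu> where "\<mu> i = f i \<bullet> (B *v f i)" for i
  define M where "M = (1/2) *\<^sub>R (A + B)"
  have ce: "(transpose Q ** X ** Q) $ i $ j = f i \<bullet> (X *v f j)" for X i j
    unfolding Q_def by (rule congr_entry)
  have cA: "transpose Q ** A ** Q = mat 1"
    by (simp add: vec_eq_iff ce fA mat_def)
  have dB: "det (transpose Q ** B ** Q) = (\<Prod>i\<in>UNIV. \<mu> i)"
    by (subst det_diagonal) (simp_all add: ce fB \<mu>_def)
  have Me: "f i \<bullet> (M *v f j) = (1/2) * (f i \<bullet> (A *v f j) + f i \<bullet> (B *v f j))" for i j
    unfolding M_def scaleR_matrix_vector_assoc[symmetric]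
    by (simp add: matrix_vector_mult_add_rdistrib inner_add_right)
  have dM: "det (transpose Q ** M ** Q) = (\<Prod>i\<in>UNIV. (1 + \<mu> i) / 2)"
    by (subst det_diagonal) (simp_all add: ce Me fA fB \<mu>_def)
  define d where "d = (det Q)^2"
  have d0: "d \<ge> 0" unfolding d_def by simp
  have dA: "d * det A = 1" using cA det_congr[of Q A] unfolding d_def by simp
  then have dpos: "d > 0" using d0 by (cases "d = 0") auto
  then show Apos: "det A > 0" using dA d0 by (metis zero_less_mult_pos zero_less_one)
  have dB': "d * det B = (\<Prod>i\<in>UNIV. \<mu> i)" using dB det_congr[of Q B] unfolding d_def by simp
  have dM': "d * det M = (\<Prod>i\<in>UNIV. (1 + \<mu> i) / 2)" using dM det_congr[of Q M] unfolding d_def by simp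
  have mupos: "\<mu> i > 0" for i unfolding \<mu>_def using fBp by simp
  have key: "d^2 * (det A * det B) = (\<Prod>i\<in>UNIV. \<mu> i)"
    using dA dB' by (simp add: power2_eq_square algebra_simps)
  have key2: "d^2 * (det M)^2 = (\<Prod>i\<in>UNIV. ((1 + \<mu> i) / 2)^2)"
    using dM' by (simp add: power_mult_distrib[symmetric] prod_power_distrib)
  have ineq: "\<mu> i \<le> ((1 + \<mu> i) / 2)^2" for i
  proof -
    have "((1 + \<mu> i) / 2)^2 - \<mu> i = ((1 - \<mu> i) / 2)^2" by (simp add: power2_eq_square field_simps)
    then show ?thesis by (metis diff_ge_0_iff_ge zero_le_power2)
  qed
  have "(\<Prod>i\<in>UNIV. \<mu> i) \<le> (\<Prod>i\<in>UNIV. ((1 + \<mu> i) / 2)^2)"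
    by (rule prod_mono) (use ineq mupos less_imp_le in blast)
  then have "d^2 * (det A * det B) \<le> d^2 * (det M)^2" using key key2 by simp
  then show "det A * det B \<le> (det ((1/2) *\<^sub>R (A + B)))^2"
    using dpos unfolding M_def by simp
  assume "A \<noteq> B"
  have "\<exists>i. \<mu> i \<noteq> 1"
  proof (rule ccontr)
    assume "\<not> ?thesis"
    then have "transpose Q ** B ** Q = mat 1"
      by (simp add: vec_eq_iff ce fB mat_def) (metis \<mu>_def)
    then have "A = B" using cancel_congr[of Q A B] cA dpos unfolding d_def by simp
    with \<open>A \<noteq> B\<close> show False by simp
  qed
  then obtain i where i: "\<mu> i \<noteq> 1" by blast
  have "\<mu> i < ((1 + \<mu> i) / 2)^2"
  proof -
    have "((1 + \<mu> i) / 2)^2 - \<mu> i = ((1 - \<mu> i) / 2)^2" by (simp add: power2_eq_square field_simps)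
    moreover have "((1 - \<mu> i) / 2)^2 > 0" using i by simp
    ultimately show ?thesis by linarith
  qed
  note lt = this
  have "(\<Prod>i\<in>UNIV. \<mu> i) < (\<Prod>i\<in>UNIV. ((1 + \<mu> i) / 2)^2)"
  proof (rule prod_mono_strict[of i])
    fix j :: 'n
    show "0 \<le> \<mu> j \<and> \<mu> j \<le> ((1 + \<mu> j) / 2)^2" using ineq mupos less_imp_le by blast
    have "1 + \<mu> j > 0" using mupos[of j] by linarith
    then show "0 < ((1 + \<mu> j) / 2)^2" by simp
  qed (use lt in auto)
  then have "d^2 * (det A * det B) < d^2 * (det M)^2" using key key2 by simp
  then show "det A * det B < (det ((1/2) *\<^sub>R (A + B)))^2"
    using dpos unfolding M_def by simp
qed



lemma Gmat_entry: "Gmat V w $ h $ k = (\<Sum>i\<in>UNIV. V$i$h * w$i * V$i$k)"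
  unfolding Gmat_def diag_mat_def
  by (simp add: matrix_matrix_mult_def transpose_def if_distrib cong: if_cong)

lemma Gmat_sym: "transpose (Gmat V w) = Gmat V w"
  by (simp add: vec_eq_iff transpose_def Gmat_entry mult.commute mult.left_commute)

lemma Gmat_mv_entry: "(Gmat V w *v y) $ h = (\<Sum>i\<in>UNIV. V$i$h * w$i * (V *v y)$i)"
proof -
  have "(Gmat V w *v y) $ h = (\<Sum>k\<in>UNIV. \<Sum>i\<in>UNIV. V$i$h * w$i * (V$i$k * y$k))"
    by (simp add: matrix_vector_mult_def Gmat_entry sum_distrib_right mult.assoc)
  also have "\<dots> = (\<Sum>i\<in>UNIV. \<Sum>k\<in>UNIV. V$i$h * w$i * (V$i$k * y$k))" by (rule sum.swap)
  also have "\<dots> = (\<Sum>i\<in>UNIV. V$i$h * w$i * (V *v y)$i)"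
    by (simp add: matrix_vector_mult_def sum_distrib_left)
  finally show ?thesis .
qed

lemma Gmat_quad: "y \<bullet> (Gmat V w *v y) = (\<Sum>i\<in>UNIV. w$i * ((V *v y)$i)^2)"
proof -
  have "y \<bullet> (Gmat V w *v y) = (\<Sum>h\<in>UNIV. \<Sum>i\<in>UNIV. y$h * (V$i$h * w$i * (V *v y)$i))"
    by (simp add: inner_vec_def Gmat_mv_entry sum_distrib_left)
  also have "\<dots> = (\<Sum>i\<in>UNIV. \<Sum>h\<in>UNIV. y$h * (V$i$h * w$i * (V *v y)$i))" by (rule sum.swap)
  also have "\<dots> = (\<Sum>i\<in>UNIV. w$i * ((V *v y)$i)^2)"
    by (simp add: matrix_vector_mult_def sum_distrib_left sum_distrib_right power2_eq_square
        mult.commute mult.left_commute)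
  finally show ?thesis .
qed

lemma det_nz_kernel:
  fixes A :: "real^'n^'n"
  assumes "det A \<noteq> 0" "A *v y = 0"
  shows "y = 0"
proof -
  obtain A' where "A' ** A = mat 1" using assms(1) invertible_det_nz invertible_def by metis
  then have "y = A' *v (A *v y)" by (simp add: matrix_vector_mul_assoc)
  then show ?thesis using assms(2) by simp
qed

lemma Gmat_pd:
  assumes w: "w \<in> nonneg_orthant" and d: "det (Gmat V w) \<noteq> 0" and y: "y \<noteq> 0"
  shows "y \<bullet> (Gmat V w *v y) > 0"
proof (rule ccontr)
  assume "\<not> ?thesis"
  then have le: "(\<Sum>i\<in>UNIV. w$i * ((V *v y)$i)^2) \<le> 0" by (simp add: Gmat_quad)
  have nn: "\<forall>i\<in>UNIV. 0 \<le> w$i * ((V *v y)$i)^2" using w unfolding nonneg_orthant_def by simp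
  then have "(\<Sum>i\<in>UNIV. w$i * ((V *v y)$i)^2) = 0" using le by (meson sum_nonneg order_antisym)
  then have z: "w$i * ((V *v y)$i)^2 = 0" for i using nn by (simp add: sum_nonneg_eq_0_iff)
  have wz: "w$i * (V *v y)$i = 0" for i using z[of i] by simp
  have "(Gmat V w *v y) $ h = 0" for h
    unfolding Gmat_mv_entry by (rule sum.neutral) (metis wz mult.assoc mult_zero_right)
  then have "Gmat V w *v y = 0" by (simp add: vec_eq_iff)
  then have "y = 0" using det_nz_kernel d by blast
  with y show False by simp
qed

lemma Gmat_pos:
  assumes w: "w \<in> nonneg_orthant" and d: "det (Gmat V w) \<noteq> 0"
  shows "det (Gmat V w) > 0"
  using det_midpoint(1)[OF Gmat_sym Gmat_sym Gmat_pd[OF w d] Gmat_pd[OF w d]] .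

lemma Gmat_add: "Gmat V (a + b) = Gmat V a + Gmat V b"
  by (simp add: vec_eq_iff Gmat_entry algebra_simps sum.distrib)

lemma Gmat_scale: "Gmat V (c *\<^sub>R a) = c *\<^sub>R Gmat V a"
  by (simp add: vec_eq_iff Gmat_entry algebra_simps sum_distrib_left)

lemma Gmat_diff: "Gmat V (a - b) = Gmat V a - Gmat V b"
  by (simp add: vec_eq_iff Gmat_entry algebra_simps sum_subtractf)

lemma Gmat_eq_iff: "Gmat V u = Gmat V v \<longleftrightarrow> u - v \<in> Kspace V"
proof -
  have "Gmat V u = Gmat V v \<longleftrightarrow> Gmat V (u - v) = 0" by (simp add: Gmat_diff)
  also have "\<dots> \<longleftrightarrow> u - v \<in> Kspace V"
    by (simp add: vec_eq_iff Gmat_entry Kspace_def mult.commute mult.left_commute)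
  finally show ?thesis .
qed

lemma Kspace_subspace: "subspace (Kspace V)"
  unfolding subspace_def Kspace_def
  by (auto simp: algebra_simps sum.distrib sum_distrib_left[symmetric])

lemma orth_proj_unique:
  fixes L :: "'a::euclidean_space set"
  assumes L: "subspace L" and p: "p \<in> L" "\<forall>u\<in>L. inner (w - p) u = 0"
  shows "orth_proj L w = p"
  unfolding orth_proj_def
proof (rule the_equality)
  show "p \<in> L \<and> (\<forall>u\<in>L. inner (w - p) u = 0)" using p by blast
  fix p' assume p': "p' \<in> L \<and> (\<forall>u\<in>L. inner (w - p') u = 0)"
  have d: "p' - p \<in> L" using L p p' by (simp add: subspace_diff)
  have "inner (w - p) (p' - p) = 0" "inner (w - p') (p' - p) = 0" using p p' d by auto
  then have "inner (p' - p) (p' - p) = 0" by (simp add: inner_diff_left)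
  then show "p' = p" by simp
qed

lemma orth_proj_char:
  fixes L :: "'a::euclidean_space set"
  assumes L: "subspace L"
  shows "orth_proj L w \<in> L \<and> (\<forall>u\<in>L. inner (w - orth_proj L w) u = 0)"
proof -
  obtain y z where "y \<in> span L" "\<And>u. u \<in> span L \<Longrightarrow> orthogonal z u" "w = y + z"
    using orthogonal_subspace_decomp_exists by blast
  moreover have sL: "span L = L" using L span_eq_iff by blast
  ultimately have y: "y \<in> L" "\<forall>u\<in>L. inner (w - y) u = 0"
    by (auto simp: orthogonal_def)
  then show ?thesis using orth_proj_unique[OF L y] by simp
qed

lemma orth_proj_linear:
  fixes L :: "'a::euclidean_space set"
  assumes L: "subspace L"
  shows "linear (orth_proj L)"
proof (rule linearI)
  fix a b
  show "orth_proj L (a + b) = orth_proj L a + orth_proj L b"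
    using orth_proj_char[OF L, of a] orth_proj_char[OF L, of b] L
    by (intro orth_proj_unique) (auto simp: subspace_add inner_diff_left inner_add_left algebra_simps)
next
  fix c and a :: 'a
  show "orth_proj L (c *\<^sub>R a) = c *\<^sub>R orth_proj L a"
  proof (rule orth_proj_unique[OF L])
    show "c *\<^sub>R orth_proj L a \<in> L" using orth_proj_char[OF L, of a] L by (simp add: subspace_mul)
    have "inner (c *\<^sub>R a - c *\<^sub>R orth_proj L a) u = c * inner (a - orth_proj L a) u" for u
      by (simp add: inner_diff_left right_diff_distrib)
    then show "\<forall>u\<in>L. inner (c *\<^sub>R a - c *\<^sub>R orth_proj L a) u = 0"
      using orth_proj_char[OF L, of a] by simp
  qed
qed

lemma orth_proj_id:
  fixes L :: "'a::euclidean_space set"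
  assumes L: "subspace L" and u: "u \<in> L"
  shows "orth_proj L u = u"
  using orth_proj_unique[OF L u] by simp

lemma orth_proj_cont:
  fixes L :: "'a::euclidean_space set"
  assumes L: "subspace L"
  shows "continuous_on S (\<lambda>w. (norm (orth_proj L w))^2)"
proof -
  have "continuous_on S (orth_proj L)"
    using orth_proj_linear[OF L] by (intro linear_continuous_on) (simp add: linear_conv_bounded_linear)
  then show ?thesis by (intro continuous_intros)
qed

lemma cont_detG: "continuous_on S (\<lambda>w. det (Gmat V w))"
  unfolding det_def Gmat_entry by (intro continuous_intros)

lemma cont_norm1: "continuous_on S norm1"
  unfolding norm1_def by (intro continuous_intros)



definition Ff :: "real^'N^'M \<Rightarrow> real^'M \<Rightarrow> real" where
  "Ff V w = - (1 / real CARD('N)) * ln (det (Gmat V w)) + norm1 w"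

lemma norm1_orth: "w \<in> nonneg_orthant \<Longrightarrow> norm1 w = (\<Sum>i\<in>UNIV. w$i)"
  unfolding norm1_def nonneg_orthant_def by simp

lemma aux_le:
  fixes a b m c x y :: real
  assumes "c \<ge> 0" "a + b \<le> 2 * m"
  shows "- c * m + (x + y) / 2 \<le> ((- c * a + x) + (- c * b + y)) / 2"
proof -
  have "c * (a + b) \<le> c * (2 * m)" by (rule mult_left_mono[OF assms(2) assms(1)])
  then show ?thesis by (simp add: field_simps)
qed

lemma aux_less:
  fixes a b m c x y :: real
  assumes "c > 0" "a + b < 2 * m"
  shows "- c * m + (x + y) / 2 < ((- c * a + x) + (- c * b + y)) / 2"
proof -
  have "c * (a + b) < c * (2 * m)" using assms by simp
  then show ?thesis by (simp add: field_simps)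
qed

lemma midpoint_props:
  fixes V :: "real^'N^'M"
  assumes u: "u \<in> nonneg_orthant" and v: "v \<in> nonneg_orthant"
    and du: "det (Gmat V u) > 0" and dv: "det (Gmat V v) > 0"
  defines "m \<equiv> (1/2) *\<^sub>R (u + v)"
  shows "m \<in> nonneg_orthant" "det (Gmat V m) > 0" "Ff V m \<le> (Ff V u + Ff V v) / 2"
    "Gmat V u \<noteq> Gmat V v \<Longrightarrow> Ff V m < (Ff V u + Ff V v) / 2"
proof -
  show mo: "m \<in> nonneg_orthant" using u v unfolding m_def nonneg_orthant_def by simp
  have Gm: "Gmat V m = (1/2) *\<^sub>R (Gmat V u + Gmat V v)"
    unfolding m_def Gmat_scale Gmat_add ..
  note pdu = Gmat_pd[OF u, of V] and pdv = Gmat_pd[OF v, of V]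
  have dm: "det (Gmat V u) * det (Gmat V v) \<le> (det (Gmat V m))^2"
    "Gmat V u \<noteq> Gmat V v \<Longrightarrow> det (Gmat V u) * det (Gmat V v) < (det (Gmat V m))^2"
    unfolding Gm using det_midpoint(2,3)[OF Gmat_sym Gmat_sym pdu pdv] du dv by auto
  have "det (Gmat V m) \<noteq> 0" using dm(1) du dv
    by (metis mult_pos_pos not_less power_zero_numeral zero_less_numeral)
  then show dmp: "det (Gmat V m) > 0" using Gmat_pos[OF mo] by blast
  have n1: "norm1 m = (norm1 u + norm1 v) / 2"
    using u v mo unfolding m_def by (simp add: norm1_orth sum.distrib sum_divide_distrib add_divide_distrib)
  have Npos: "real CARD('N) > 0" by simp
  have lnm: "ln (det (Gmat V u)) + ln (det (Gmat V v)) \<le> 2 * ln (det (Gmat V m))"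
  proof -
    have "ln (det (Gmat V u)) + ln (det (Gmat V v)) = ln (det (Gmat V u) * det (Gmat V v))"
      using du dv by (simp add: ln_mult)
    also have "\<dots> \<le> ln ((det (Gmat V m))^2)" by (rule iffD2[OF ln_le_cancel_iff]) (use dm(1) mult_pos_pos[OF du dv] dmp in auto)
    also have "\<dots> = 2 * ln (det (Gmat V m))" using dmp by (simp add: ln_realpow)
    finally show ?thesis .
  qed
  show "Ff V m \<le> (Ff V u + Ff V v) / 2"
    unfolding Ff_def n1 by (rule aux_le) (use lnm in auto)
  assume ne: "Gmat V u \<noteq> Gmat V v"
  have lnm2: "ln (det (Gmat V u)) + ln (det (Gmat V v)) < 2 * ln (det (Gmat V m))"
  proof -
    have "ln (det (Gmat V u)) + ln (det (Gmat V v)) = ln (det (Gmat V u) * det (Gmat V v))"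
      using du dv by (simp add: ln_mult)
    also have "\<dots> < ln ((det (Gmat V m))^2)" by (rule iffD2[OF ln_less_cancel_iff]) (use dm(2)[OF ne] mult_pos_pos[OF du dv] dmp in auto)
    also have "\<dots> = 2 * ln (det (Gmat V m))" using dmp by (simp add: ln_realpow)
    finally show ?thesis .
  qed
  show "Ff V m < (Ff V u + Ff V v) / 2"
    unfolding Ff_def n1 by (rule aux_less) (use lnm2 in auto)
qed

lemma det_bound:
  fixes A :: "real^'n^'n"
  assumes b: "\<And>i j. \<bar>A$i$j\<bar> \<le> b"
  shows "\<bar>det A\<bar> \<le> real (card {p. p permutes (UNIV::'n set)}) * b ^ CARD('n)"
proof -
  have b0: "b \<ge> 0" using b[of undefined undefined] by linarith
  have "\<bar>det A\<bar> \<le> (\<Sum>p\<in>{p. p permutes (UNIV::'n set)}. \<bar>of_int (sign p) * (\<Prod>i\<in>UNIV. A $ i $ p i)\<bar>)"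
    unfolding det_def by (rule sum_abs)
  also have "\<dots> \<le> (\<Sum>p\<in>{p. p permutes (UNIV::'n set)}. b ^ CARD('n))"
  proof (rule sum_mono)
    fix p :: "'n \<Rightarrow> 'n"
    have s: "\<bar>(of_int (sign p) :: real)\<bar> = 1" by (simp add: sign_def)
    have "\<bar>of_int (sign p) * (\<Prod>i\<in>UNIV. A $ i $ p i)\<bar> = (\<Prod>i\<in>UNIV. \<bar>A $ i $ p i\<bar>)"
      by (simp add: abs_mult s abs_prod)
    also have "\<dots> \<le> (\<Prod>i\<in>(UNIV::'n set). b)" by (rule prod_mono) (simp add: b)
    also have "\<dots> = b ^ CARD('n)" by simp
    finally show "\<bar>of_int (sign p) * (\<Prod>i\<in>UNIV. A $ i $ p i)\<bar> \<le> b ^ CARD('n)" .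
  qed
  also have "\<dots> = real (card {p. p permutes (UNIV::'n set)}) * b ^ CARD('n)" by simp
  finally show ?thesis .
qed

definition Cv :: "real^'N^'M \<Rightarrow> real" where
  "Cv V = (\<Sum>i\<in>UNIV. \<Sum>h\<in>UNIV. \<Sum>k\<in>UNIV. \<bar>V$i$h * V$i$k\<bar>) + 1"

lemma Cv_pos: "Cv V \<ge> 1"
  unfolding Cv_def by (simp add: sum_nonneg)

lemma Cv_bound: "\<bar>V$i$h * V$i$k\<bar> \<le> Cv V"
proof -
  have "\<bar>V$i$h * V$i$k\<bar> \<le> (\<Sum>k\<in>UNIV. \<bar>V$i$h * V$i$k\<bar>)"
    by (rule member_le_sum) auto
  also have "\<dots> \<le> (\<Sum>h\<in>UNIV. \<Sum>k\<in>UNIV. \<bar>V$i$h * V$i$k\<bar>)"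
    by (rule member_le_sum[of h UNIV "\<lambda>h. \<Sum>k\<in>UNIV. \<bar>V$i$h * V$i$k\<bar>"]) (auto simp: sum_nonneg)
  also have "\<dots> \<le> (\<Sum>i\<in>UNIV. \<Sum>h\<in>UNIV. \<Sum>k\<in>UNIV. \<bar>V$i$h * V$i$k\<bar>)"
    by (rule member_le_sum[of i UNIV "\<lambda>i. \<Sum>h\<in>UNIV. \<Sum>k\<in>UNIV. \<bar>V$i$h * V$i$k\<bar>"]) (auto simp: sum_nonneg)
  finally show ?thesis unfolding Cv_def by linarith
qed

lemma Gmat_entry_bound:
  assumes w: "w \<in> nonneg_orthant"
  shows "\<bar>Gmat V w $ h $ k\<bar> \<le> Cv V * norm1 w"
proof -
  have w0: "w$i \<ge> 0" for i using w unfolding nonneg_orthant_def by auto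
  have "\<bar>Gmat V w $ h $ k\<bar> \<le> (\<Sum>i\<in>UNIV. \<bar>V$i$h * w$i * V$i$k\<bar>)"
    unfolding Gmat_entry by (rule sum_abs)
  also have "\<dots> \<le> (\<Sum>i\<in>UNIV. Cv V * w$i)"
  proof (rule sum_mono)
    fix i
    have "\<bar>V$i$h * w$i * V$i$k\<bar> = \<bar>V$i$h * V$i$k\<bar> * w$i" using w0[of i] by (simp add: abs_mult)
    also have "\<dots> \<le> Cv V * w$i" by (rule mult_right_mono[OF Cv_bound w0])
    finally show "\<bar>V$i$h * w$i * V$i$k\<bar> \<le> Cv V * w$i" .
  qed
  also have "\<dots> = Cv V * norm1 w" using norm1_orth[OF w] by (simp add: sum_distrib_left)
  finally show ?thesis .
qed

definition K0 :: "real^'N^'M \<Rightarrow> real" where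
  "K0 V = ln (real (card {p. p permutes (UNIV::'N set)})) / real CARD('N) + ln (Cv V)"

lemma ln_le_half: "(x::real) > 0 \<Longrightarrow> ln x \<le> x / 2"
proof -
  assume x: "x > 0"
  have "ln x = ln 2 + ln (x / 2)" using x by (simp add: ln_div)
  also have "\<dots> \<le> ln 2 + (x / 2 - 1)" using ln_le_minus_one[of "x/2"] x by simp
  also have "\<dots> \<le> x / 2" using ln_2_less_1 by simp
  finally show ?thesis .
qed

lemma Ff_lower:
  fixes V :: "real^'N^'M"
  assumes w: "w \<in> nonneg_orthant" and d: "det (Gmat V w) > 0"
  shows "norm1 w / 2 - K0 V \<le> Ff V w"
proof -
  define s where "s = norm1 w"
  define P0 where "P0 = real (card {p. p permutes (UNIV::'N set)})"
  define N where "N = real CARD('N)"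
  have N: "N \<ge> 1" unfolding N_def by (simp add: Suc_le_eq)
  have P0: "P0 \<ge> 1" unfolding P0_def
  proof -
    have "id \<in> {p. p permutes (UNIV::'N set)}" by (simp add: permutes_id)
    moreover have "finite {p. p permutes (UNIV::'N set)}" by (simp add: finite_permutations)
    ultimately have "card {p. p permutes (UNIV::'N set)} \<ge> 1"
      by (metis One_nat_def Suc_leI card_gt_0_iff empty_iff)
    then show "real (card {p. p permutes (UNIV::'N set)}) \<ge> 1" by simp
  qed
  have s0: "s \<ge> 0" unfolding s_def norm1_def by (simp add: sum_nonneg)
  have db: "det (Gmat V w) \<le> P0 * (Cv V * s) ^ CARD('N)"
    using det_bound[of "Gmat V w" "Cv V * s"] Gmat_entry_bound[OF w] unfolding P0_def s_def
    by (metis abs_le_D1)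
  have spos: "s > 0"
  proof (rule ccontr)
    assume "\<not> s > 0" then have "s = 0" using s0 by simp
    then have "P0 * (Cv V * s) ^ CARD('N) = 0" by simp
    then have "det (Gmat V w) \<le> 0" using db by linarith
    then show False using d by simp
  qed
  have Cp: "Cv V > 0" using Cv_pos[of V] by simp
  have "ln (det (Gmat V w)) \<le> ln (P0 * (Cv V * s) ^ CARD('N))"
    using db d by simp
  also have "\<dots> = ln P0 + N * (ln (Cv V) + ln s)"
    using P0 Cp spos by (simp add: ln_mult ln_realpow N_def)
  finally have l1: "ln (det (Gmat V w)) \<le> ln P0 + N * (ln (Cv V) + ln s)" .
  have l2: "ln s \<le> s / 2" using ln_le_half spos by simp
  have "(1 / N) * ln (det (Gmat V w)) \<le> (1 / N) * (ln P0 + N * (ln (Cv V) + ln s))"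
    using l1 N by (simp add: divide_right_mono)
  also have "\<dots> = ln P0 / N + ln (Cv V) + ln s" using N by (simp add: field_simps)
  finally have "(1 / N) * ln (det (Gmat V w)) \<le> ln P0 / N + ln (Cv V) + ln s" .
  then show ?thesis unfolding Ff_def K0_def using l2
    by (simp add: s_def P0_def N_def)
qed



definition Lset :: "real^'N^'M \<Rightarrow> real \<Rightarrow> (real^'M) set" where
  "Lset V c = {w. w \<in> nonneg_orthant \<and> norm1 w \<le> 2 * (c + K0 V) \<and> exp (- real CARD('N) * c) \<le> det (Gmat V w)}"

definition qf :: "real^'N^'M \<Rightarrow> real^'M \<Rightarrow> real" where
  "qf V w = (norm (orth_proj (Kspace V) w))^2"

lemma Lset_mem:
  fixes V :: "real^'N^'M"
  assumes w: "w \<in> nonneg_orthant" and d: "det (Gmat V w) > 0" and c: "Ff V w \<le> c"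
  shows "w \<in> Lset V c"
proof -
  have "norm1 w \<le> 2 * (c + K0 V)" using Ff_lower[OF w d] c by (smt (verit) field_sum_of_halves)
  moreover have "exp (- real CARD('N) * c) \<le> det (Gmat V w)"
  proof -
    have s0: "norm1 w \<ge> 0" unfolding norm1_def by (simp add: sum_nonneg)
    have N: "real CARD('N) > 0" by simp
    have "- (1 / real CARD('N)) * ln (det (Gmat V w)) \<le> c" using c s0 unfolding Ff_def by linarith
    then have "- ln (det (Gmat V w)) \<le> real CARD('N) * c" using N by (simp add: field_simps)
    then have "- real CARD('N) * c \<le> ln (det (Gmat V w))" by linarith
    then have "exp (- real CARD('N) * c) \<le> exp (ln (det (Gmat V w)))" by simp
    then show ?thesis using d by simp
  qed
  ultimately show ?thesis using w unfolding Lset_def by blast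
qed

lemma Lset_pos:
  fixes V :: "real^'N^'M"
  shows "w \<in> Lset V c \<Longrightarrow> det (Gmat V w) > 0"
  unfolding Lset_def using exp_gt_zero by (smt (verit) mem_Collect_eq)

lemma Lset_orth: "w \<in> Lset V c \<Longrightarrow> w \<in> nonneg_orthant"
  unfolding Lset_def by blast

lemma Lset_compact:
  fixes V :: "real^'N^'M"
  shows "compact (Lset V c)"
unfolding compact_eq_bounded_closed
proof (rule conjI)
  show "bounded (Lset V c)"
    unfolding bounded_iff
  proof (intro exI ballI)
    fix w assume "w \<in> Lset V c"
    then have "norm1 w \<le> 2 * (c + K0 V)" unfolding Lset_def by blast
    moreover have "norm w \<le> norm1 w" unfolding norm1_def by (rule norm_le_l1_cart)
    ultimately show "norm w \<le> 2 * (c + K0 V)" by linarith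
  qed
  have e: "Lset V c = {w. \<forall>i. 0 \<le> w $ i} \<inter> {w. norm1 w \<le> 2 * (c + K0 V)} \<inter> {w. exp (- real CARD('N) * c) \<le> det (Gmat V w)}"
    unfolding Lset_def nonneg_orthant_def by blast
  show "closed (Lset V c)"
    unfolding e
    by (intro closed_Int closed_Collect_all closed_Collect_le continuous_intros cont_norm1 cont_detG)
qed

lemma Lset_cont:
  fixes V :: "real^'N^'M"
  shows "continuous_on (Lset V c) (Ff V)"
  unfolding Ff_def
  apply (intro continuous_intros cont_norm1 cont_detG)
  by (metis Lset_pos less_irrefl)

lemma one_pos:
  fixes V :: "real^'N^'M"
  assumes inj: "inj ((*v) V)"
  shows "(\<chi> i. 1) \<in> nonneg_orthant" "det (Gmat V (\<chi> i. 1)) > 0"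
proof -
  show "(\<chi> i. 1) \<in> nonneg_orthant" unfolding nonneg_orthant_def by simp
  have pd: "y \<bullet> (Gmat V (\<chi> i. 1) *v y) > 0" if "y \<noteq> 0" for y
  proof -
    have "V *v y \<noteq> 0" using inj that by (metis injD matrix_vector_mult_0_right)
    then have "(V *v y) \<bullet> (V *v y) > 0" by simp
    moreover have "y \<bullet> (Gmat V (\<chi> i. 1) *v y) = (V *v y) \<bullet> (V *v y)"
      by (simp only: Gmat_quad) (simp add: inner_vec_def power2_eq_square)
    ultimately show ?thesis by simp
  qed
  show "det (Gmat V (\<chi> i. 1)) > 0"
    using det_midpoint(1)[OF Gmat_sym Gmat_sym pd pd] .
qed

lemma qf_nonneg: "qf V w \<ge> 0" unfolding qf_def by simp

lemma qf_cont: "continuous_on S (qf V)"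
  unfolding qf_def by (rule orth_proj_cont[OF Kspace_subspace])

lemma exists_min:
  fixes V :: "real^'N^'M"
  assumes inj: "inj ((*v) V)" and eta: "\<eta> \<ge> 0"
  shows "\<exists>w. w \<in> nonneg_orthant \<and> det (Gmat V w) > 0 \<and>
     (\<forall>v. v \<in> nonneg_orthant \<and> det (Gmat V v) > 0 \<longrightarrow> Ff V w + \<eta> * qf V w \<le> Ff V v + \<eta> * qf V v)"
proof -
  define one :: "real^'M" where "one = (\<chi> i. 1)"
  have oo: "one \<in> nonneg_orthant" "det (Gmat V one) > 0" using one_pos[OF inj] unfolding one_def by auto
  define c where "c = Ff V one + \<eta> * qf V one"
  have Fle: "Ff V v \<le> c" if "Ff V v + \<eta> * qf V v \<le> c" for v
    using that eta qf_nonneg[of V v] by (smt (verit) mult_nonneg_nonneg)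
  have oneL: "one \<in> Lset V c" by (intro Lset_mem[OF oo]) (simp add: c_def eta qf_nonneg)
  have "continuous_on (Lset V c) (\<lambda>w. Ff V w + \<eta> * qf V w)"
    by (intro continuous_intros Lset_cont qf_cont)
  then obtain w where w: "w \<in> Lset V c" and wmin: "\<And>v. v \<in> Lset V c \<Longrightarrow> Ff V w + \<eta> * qf V w \<le> Ff V v + \<eta> * qf V v"
    using continuous_attains_inf[OF Lset_compact, of V c] oneL by blast
  show ?thesis
  proof (intro exI conjI allI impI)
    show "w \<in> nonneg_orthant" using w by (rule Lset_orth)
    show "det (Gmat V w) > 0" using w by (rule Lset_pos)
    fix v assume v: "v \<in> nonneg_orthant \<and> det (Gmat V v) > 0"
    show "Ff V w + \<eta> * qf V w \<le> Ff V v + \<eta> * qf V v"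
    proof (cases "Ff V v + \<eta> * qf V v \<le> c")
      case True
      then have "v \<in> Lset V c" using Lset_mem v Fle by blast
      then show ?thesis by (rule wmin)
    next
      case False
      then show ?thesis using wmin[OF oneL] unfolding c_def by linarith
    qed
  qed
qed



definition Pmin :: "real^'N^'M \<Rightarrow> real \<Rightarrow> real^'M \<Rightarrow> bool" where
  "Pmin V \<eta> w \<longleftrightarrow> w \<in> nonneg_orthant \<and> det (Gmat V w) > 0 \<and>
     (\<forall>v. v \<in> nonneg_orthant \<and> det (Gmat V v) > 0 \<longrightarrow> Ff V w + \<eta> * qf V w \<le> Ff V v + \<eta> * qf V v)"

lemma Eeta_val: "Eeta V \<eta> w = (if det (Gmat V w) \<le> 0 then \<infinity> else ereal (Ff V w + \<eta> * qf V w))"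
  unfolding Eeta_def Efun_def Ff_def qf_def by simp

lemma min_char:
  fixes V :: "real^'N^'M"
  assumes inj: "inj ((*v) V)"
  shows "is_minimizer_on (Eeta V \<eta>) nonneg_orthant w \<longleftrightarrow> Pmin V \<eta> w"
proof
  assume m: "is_minimizer_on (Eeta V \<eta>) nonneg_orthant w"
  define one :: "real^'M" where "one = (\<chi> i. 1)"
  have oo: "one \<in> nonneg_orthant" "det (Gmat V one) > 0" using one_pos[OF inj] unfolding one_def by auto
  have w: "w \<in> nonneg_orthant" and le: "\<And>v. v \<in> nonneg_orthant \<Longrightarrow> Eeta V \<eta> w \<le> Eeta V \<eta> v"
    using m unfolding is_minimizer_on_def by auto
  have "Eeta V \<eta> w \<le> Eeta V \<eta> one" using le oo by simp
  then have dw: "det (Gmat V w) > 0" using oo(2) unfolding Eeta_val by (auto split: if_splits)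
  show "Pmin V \<eta> w" unfolding Pmin_def
  proof (intro conjI w dw allI impI)
    fix v assume v: "v \<in> nonneg_orthant \<and> det (Gmat V v) > 0"
    then show "Ff V w + \<eta> * qf V w \<le> Ff V v + \<eta> * qf V v"
      using le[of v] dw unfolding Eeta_val by auto
  qed
next
  assume p: "Pmin V \<eta> w"
  show "is_minimizer_on (Eeta V \<eta>) nonneg_orthant w" unfolding is_minimizer_on_def
  proof (intro conjI ballI)
    show "w \<in> nonneg_orthant" using p unfolding Pmin_def by blast
    fix v :: "real^'M" assume v: "v \<in> nonneg_orthant"
    show "Eeta V \<eta> w \<le> Eeta V \<eta> v"
    proof (cases "det (Gmat V v) \<le> 0")
      case True then show ?thesis unfolding Eeta_val[of V \<eta> v] by simp
    next
      case False then show ?thesis using p v unfolding Pmin_def Eeta_val by auto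
    qed
  qed
qed

lemma Sset_char:
  fixes V :: "real^'N^'M"
  assumes inj: "inj ((*v) V)"
  shows "w \<in> Sset V \<longleftrightarrow> Pmin V 0 w"
proof -
  have "Eeta V 0 = Efun V" by (rule ext) (simp add: Eeta_def)
  then show ?thesis unfolding Sset_def using min_char[OF inj, of 0 w] by simp
qed

lemma qf_mid:
  fixes V :: "real^'N^'M"
  shows "qf V ((1/2) *\<^sub>R (u + v)) = (qf V u + qf V v) / 2 - (norm (orth_proj (Kspace V) (u - v)))^2 / 4"
proof -
  have lin: "linear (orth_proj (Kspace V))" by (rule orth_proj_linear[OF Kspace_subspace])
  define a where "a = orth_proj (Kspace V) u"
  define b where "b = orth_proj (Kspace V) v"
  have m: "orth_proj (Kspace V) ((1/2) *\<^sub>R (u + v)) = (1/2) *\<^sub>R (a + b)"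
    unfolding a_def b_def using lin by (simp add: linear_add linear_scale)
  have d: "orth_proj (Kspace V) (u - v) = a - b"
    unfolding a_def b_def using lin by (simp add: linear_diff)
  show ?thesis unfolding qf_def m d a_def[symmetric] b_def[symmetric]
    by (simp add: power2_norm_eq_inner inner_add_left inner_add_right inner_diff_left inner_diff_right
        inner_commute field_simps)
qed

lemma Pmin_unique:
  fixes V :: "real^'N^'M"
  assumes eta: "\<eta> > 0" and u: "Pmin V \<eta> u" and v: "Pmin V \<eta> v"
  shows "u = v"
proof (rule ccontr)
  assume ne: "u \<noteq> v"
  have uo: "u \<in> nonneg_orthant" "det (Gmat V u) > 0" and vo: "v \<in> nonneg_orthant" "det (Gmat V v) > 0"
    using u v unfolding Pmin_def by auto
  define m where "m = (1/2) *\<^sub>R (u + v)"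
  note mp = midpoint_props[OF uo(1) vo(1) uo(2) vo(2), folded m_def]
  have eq: "Ff V u + \<eta> * qf V u = Ff V v + \<eta> * qf V v"
    using u v uo vo unfolding Pmin_def by (meson order_antisym)
  have um: "Ff V u + \<eta> * qf V u \<le> Ff V m + \<eta> * qf V m" using u mp(1,2) unfolding Pmin_def by blast
  have qm: "qf V m \<le> (qf V u + qf V v) / 2" unfolding m_def qf_mid
    using zero_le_power2[of "norm (orth_proj (Kspace V) (u - v))"] by linarith
  show False
  proof (cases "Gmat V u = Gmat V v")
    case True
    then have K: "u - v \<in> Kspace V" using Gmat_eq_iff by blast
    then have "orth_proj (Kspace V) (u - v) = u - v" by (rule orth_proj_id[OF Kspace_subspace])
    then have "(norm (orth_proj (Kspace V) (u - v)))^2 > 0" using ne by simp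
    then have "qf V m < (qf V u + qf V v) / 2" unfolding m_def qf_mid by linarith
    then have "\<eta> * qf V m < \<eta> * ((qf V u + qf V v) / 2)" using eta by simp
    then show False using mp(3) um eq by (simp add: field_simps)
  next
    case False
    have "\<eta> * qf V m \<le> \<eta> * ((qf V u + qf V v) / 2)" using eta qm by simp
    then show False using mp(4)[OF False] um eq by (simp add: field_simps)
  qed
qed



lemma S_mid:
  fixes V :: "real^'N^'M"
  assumes u: "Pmin V 0 u" and v: "Pmin V 0 v"
  shows "Gmat V u = Gmat V v" "Pmin V 0 ((1/2) *\<^sub>R (u + v))"
proof -
  have uo: "u \<in> nonneg_orthant" "det (Gmat V u) > 0" and vo: "v \<in> nonneg_orthant" "det (Gmat V v) > 0"
    using u v unfolding Pmin_def by auto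
  define m where "m = (1/2) *\<^sub>R (u + v)"
  note mp = midpoint_props[OF uo(1) vo(1) uo(2) vo(2), folded m_def]
  have eq: "Ff V u = Ff V v"
    using u v uo vo unfolding Pmin_def by (simp add: order_antisym)
  have um: "Ff V u \<le> Ff V m" using u mp(1,2) unfolding Pmin_def by simp
  show "Gmat V u = Gmat V v"
  proof (rule ccontr)
    assume "Gmat V u \<noteq> Gmat V v"
    from mp(4)[OF this] um eq show False by simp
  qed
  have "Ff V m \<le> Ff V u" using mp(3) eq by simp
  then show "Pmin V 0 m" using u mp(1,2) unfolding Pmin_def by auto
qed

lemma S_hat_exists:
  fixes V :: "real^'N^'M"
  assumes inj: "inj ((*v) V)"
  shows "\<exists>wh. Pmin V 0 wh \<and> (\<forall>w. Pmin V 0 w \<longrightarrow> qf V wh \<le> qf V w)"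
proof -
  obtain s0 where s0: "Pmin V 0 s0" using exists_min[OF inj, of 0] unfolding Pmin_def by auto
  define m0 where "m0 = Ff V s0"
  define S where "S = {w \<in> Lset V m0. Ff V w \<le> m0}"
  have Seq: "w \<in> S \<longleftrightarrow> Pmin V 0 w" for w
  proof
    assume "w \<in> S"
    then have w: "w \<in> Lset V m0" "Ff V w \<le> m0" unfolding S_def by auto
    show "Pmin V 0 w" unfolding Pmin_def
      using Lset_orth[OF w(1)] Lset_pos[OF w(1)] w(2) s0 unfolding Pmin_def m0_def by force
  next
    assume p: "Pmin V 0 w"
    then have fm: "Ff V w \<le> m0" using s0 unfolding Pmin_def m0_def by simp
    moreover have "w \<in> Lset V m0" using p fm unfolding Pmin_def by (intro Lset_mem) auto
    ultimately show "w \<in> S" unfolding S_def by simp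
  qed
  have "closed S" unfolding S_def
    by (rule continuous_on_closed_Collect_le[OF Lset_cont continuous_on_const compact_imp_closed[OF Lset_compact]])
  then have "compact S"
    using compact_Int_closed[OF Lset_compact, of S V m0] unfolding S_def by (simp add: Int_absorb1 Collect_conj_eq[symmetric] Int_def)
  moreover have "S \<noteq> {}" using Seq s0 by blast
  moreover have "continuous_on S (qf V)" by (rule qf_cont)
  ultimately obtain wh where "wh \<in> S" "\<And>w. w \<in> S \<Longrightarrow> qf V wh \<le> qf V w"
    using continuous_attains_inf by metis
  then show ?thesis using Seq by blast
qed

lemma arith_aux: "0 < (x::real) \<Longrightarrow> (q::real) = (qa + qb) / 2 - x / 4 \<Longrightarrow> qa = qb \<Longrightarrow> q < qa"
  by simp

lemma S_hat_unique:
  fixes V :: "real^'N^'M"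
  assumes a: "Pmin V 0 a" "\<forall>w. Pmin V 0 w \<longrightarrow> qf V a \<le> qf V w"
    and b: "Pmin V 0 b" "\<forall>w. Pmin V 0 w \<longrightarrow> qf V b \<le> qf V w"
  shows "a = b"
proof (rule ccontr)
  assume ne: "a \<noteq> b"
  note sm = S_mid[OF a(1) b(1)]
  have qab: "qf V a = qf V b" using a b by (simp add: order_antisym)
  have "a - b \<in> Kspace V" using sm(1) Gmat_eq_iff by blast
  then have "orth_proj (Kspace V) (a - b) = a - b" by (rule orth_proj_id[OF Kspace_subspace])
  then have "(norm (orth_proj (Kspace V) (a - b)))^2 > 0" using ne by simp
  moreover have "qf V ((1/2) *\<^sub>R (a + b)) = (qf V a + qf V b) / 2 - (norm (orth_proj (Kspace V) (a - b)))^2 / 4"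
    by (rule qf_mid)
  ultimately have "qf V ((1/2) *\<^sub>R (a + b)) < qf V a" using qab
    by (metis arith_aux)
  moreover have "qf V a \<le> qf V ((1/2) *\<^sub>R (a + b))" using a(2) sm(2) by blast
  ultimately show False by simp
qed



lemma tikhonov:
  fixes V :: "real^'N^'M" and \<eta> :: "nat \<Rightarrow> real" and wn :: "nat \<Rightarrow> real^'M"
  assumes inj: "inj ((*v) V)" and pos: "\<And>n. 0 < \<eta> n" and dec: "decseq \<eta>" and lim: "\<eta> \<longlonglongrightarrow> 0"
    and wnP: "\<And>n. Pmin V (\<eta> n) (wn n)"
    and whP: "Pmin V 0 wh" "\<forall>w. Pmin V 0 w \<longrightarrow> qf V wh \<le> qf V w"
    and whU: "\<And>w'. Pmin V 0 w' \<Longrightarrow> (\<forall>w. Pmin V 0 w \<longrightarrow> qf V w' \<le> qf V w) \<Longrightarrow> w' = wh"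
  shows "wn \<longlonglongrightarrow> wh"
proof (rule ccontr)
  define m0 where "m0 = Ff V wh"
  define qh where "qh = qf V wh"
  have whO: "wh \<in> nonneg_orthant" "det (Gmat V wh) > 0" using whP(1) unfolding Pmin_def by auto
  have qh0: "qh \<ge> 0" unfolding qh_def by (rule qf_nonneg)
  have bnd: "qf V (wn n) \<le> qh \<and> Ff V (wn n) \<le> m0 + \<eta> n * qh" for n
  proof -
    have wo: "wn n \<in> nonneg_orthant" "det (Gmat V (wn n)) > 0" using wnP[of n] unfolding Pmin_def by auto
    have a: "Ff V (wn n) + \<eta> n * qf V (wn n) \<le> m0 + \<eta> n * qh"
      using wnP[of n] whO unfolding Pmin_def m0_def qh_def by blast
    have b: "m0 \<le> Ff V (wn n)" using whP(1) wo unfolding Pmin_def m0_def by simp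
    have "\<eta> n * qf V (wn n) \<le> \<eta> n * qh" using a b by linarith
    then have q: "qf V (wn n) \<le> qh" using pos[of n] by simp
    have "\<eta> n * qf V (wn n) \<ge> 0" using pos[of n] qf_nonneg[of V "wn n"] by simp
    then show ?thesis using q a by linarith
  qed
  define c where "c = m0 + \<eta> 0 * qh"
  have inL: "wn n \<in> Lset V c" for n
  proof -
    have "\<eta> n \<le> \<eta> 0" using dec unfolding decseq_def by simp
    then have "\<eta> n * qh \<le> \<eta> 0 * qh" using qh0 by (simp add: mult_right_mono)
    then have "Ff V (wn n) \<le> c" using bnd[of n] unfolding c_def by linarith
    then show ?thesis using wnP[of n] unfolding Pmin_def by (intro Lset_mem) auto
  qed
  assume nc: "\<not> wn \<longlonglongrightarrow> wh"
  then obtain e where e: "e > 0" "\<not> eventually (\<lambda>n. dist (wn n) wh < e) sequentially"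
    unfolding tendsto_iff by blast
  from not_eventually_sequentiallyD[OF e(2)] obtain r :: "nat \<Rightarrow> nat" where r: "strict_mono r" "\<And>n. \<not> dist (wn (r n)) wh < e"
    by auto
  have "\<forall>n. (wn \<circ> r) n \<in> Lset V c" using inL by simp
  then obtain l r2 where l: "l \<in> Lset V c" "strict_mono r2" "((wn \<circ> r) \<circ> r2) \<longlonglongrightarrow> l"
    using seq_compactE[OF compact_imp_seq_compact[OF Lset_compact]] by metis
  define s where "s = r \<circ> r2"
  have s: "strict_mono s" using r l unfolding s_def by (simp add: strict_mono_o)
  have ws: "(\<lambda>n. wn (s n)) \<longlonglongrightarrow> l" using l(3) by (simp add: s_def comp_def)
  have es: "(\<lambda>n. \<eta> (s n)) \<longlonglongrightarrow> 0" using LIMSEQ_subseq_LIMSEQ[OF lim s] by (simp add: comp_def)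
  have Fl: "(\<lambda>n. Ff V (wn (s n))) \<longlonglongrightarrow> Ff V l"
    using continuous_on_tendsto_compose[OF Lset_cont ws l(1)] inL by simp
  have ql: "(\<lambda>n. qf V (wn (s n))) \<longlonglongrightarrow> qf V l"
    using continuous_on_tendsto_compose[OF qf_cont[of UNIV V] ws] by simp
  have rhs: "(\<lambda>n. m0 + \<eta> (s n) * qh) \<longlonglongrightarrow> m0"
    using tendsto_add[OF tendsto_const tendsto_mult_left_zero[OF es]] by simp
  have Fle: "Ff V l \<le> m0"
    by (rule LIMSEQ_le[OF Fl rhs]) (use bnd in blast)
  have qle: "qf V l \<le> qh"
    by (rule LIMSEQ_le_const2[OF ql]) (use bnd in blast)
  have dle: "e \<le> dist l wh"
  proof (rule LIMSEQ_le_const[OF tendsto_dist[OF ws tendsto_const]])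
    show "\<exists>N. \<forall>n\<ge>N. e \<le> dist (wn (s n)) wh" using r(2) unfolding s_def by (simp add: not_less)
  qed
  have lP: "Pmin V 0 l"
    unfolding Pmin_def
  proof (intro conjI allI impI)
    show "l \<in> nonneg_orthant" using l(1) by (rule Lset_orth)
    show "det (Gmat V l) > 0" using l(1) by (rule Lset_pos)
    fix v assume "v \<in> nonneg_orthant \<and> det (Gmat V v) > 0"
    then have "m0 \<le> Ff V v" using whP(1) unfolding Pmin_def m0_def by simp
    then show "Ff V l + 0 * qf V l \<le> Ff V v + 0 * qf V v" using Fle by simp
  qed
  have "\<forall>w. Pmin V 0 w \<longrightarrow> qf V l \<le> qf V w" using qle whP(2) unfolding qh_def by force
  then have "l = wh" using whU lP by blast
  then show False using dle e by simp
qed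



lemma main_V:
  fixes V :: "real^'N^'M" and \<eta> :: "nat \<Rightarrow> real"
  assumes inj: "inj ((*v) V)" and pos: "\<And>n. 0 < \<eta> n" and dec: "decseq \<eta>" and lim: "\<eta> \<longlonglongrightarrow> 0"
  shows "(\<forall>n. \<exists>!w. is_minimizer_on (Eeta V (\<eta> n)) nonneg_orthant w)
    \<and> (\<exists>!wh. wh \<in> Sset V \<and>
          (\<forall>w\<in>Sset V. (norm (orth_proj (Kspace V) wh))\<^sup>2 \<le> (norm (orth_proj (Kspace V) w))\<^sup>2))
    \<and> (\<lambda>n. THE w. is_minimizer_on (Eeta V (\<eta> n)) nonneg_orthant w)
        \<longlonglongrightarrow> (THE wh. wh \<in> Sset V \<and>
          (\<forall>w\<in>Sset V. (norm (orth_proj (Kspace V) wh))\<^sup>2 \<le> (norm (orth_proj (Kspace V) w))\<^sup>2))"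
proof -
  have ex1: "\<forall>n. \<exists>!w. is_minimizer_on (Eeta V (\<eta> n)) nonneg_orthant w"
  proof
    fix n
    have e: "\<exists>w. Pmin V (\<eta> n) w"
      using exists_min[OF inj, of "\<eta> n"] pos[of n] unfolding Pmin_def by (auto simp: less_imp_le)
    show "\<exists>!w. is_minimizer_on (Eeta V (\<eta> n)) nonneg_orthant w"
      unfolding min_char[OF inj] using e Pmin_unique[OF pos] by blast
  qed
  have Qchar: "(wh \<in> Sset V \<and> (\<forall>w\<in>Sset V. (norm (orth_proj (Kspace V) wh))\<^sup>2 \<le> (norm (orth_proj (Kspace V) w))\<^sup>2))
     \<longleftrightarrow> (Pmin V 0 wh \<and> (\<forall>w. Pmin V 0 w \<longrightarrow> qf V wh \<le> qf V w))" for wh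
    using Sset_char[OF inj] unfolding qf_def by auto
  have ex2: "\<exists>!wh. wh \<in> Sset V \<and>
          (\<forall>w\<in>Sset V. (norm (orth_proj (Kspace V) wh))\<^sup>2 \<le> (norm (orth_proj (Kspace V) w))\<^sup>2)"
    unfolding Qchar using S_hat_exists[OF inj] S_hat_unique by blast
  define wn where "wn n = (THE w. is_minimizer_on (Eeta V (\<eta> n)) nonneg_orthant w)" for n
  have wnP: "Pmin V (\<eta> n) (wn n)" for n
    using theI'[OF ex1[rule_format, of n]] min_char[OF inj] unfolding wn_def by blast
  define wh where "wh = (THE wh. wh \<in> Sset V \<and>
          (\<forall>w\<in>Sset V. (norm (orth_proj (Kspace V) wh))\<^sup>2 \<le> (norm (orth_proj (Kspace V) w))\<^sup>2))"
  have whP: "Pmin V 0 wh \<and> (\<forall>w. Pmin V 0 w \<longrightarrow> qf V wh \<le> qf V w)"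
    using theI'[OF ex2] unfolding Qchar wh_def .
  have "wn \<longlonglongrightarrow> wh"
  proof (rule tikhonov[OF inj pos dec lim wnP])
    show "Pmin V 0 wh" "\<forall>w. Pmin V 0 w \<longrightarrow> qf V wh \<le> qf V w" using whP by auto
    fix w' assume "Pmin V 0 w'" "\<forall>w. Pmin V 0 w \<longrightarrow> qf V w' \<le> qf V w"
    then show "w' = wh" using whP S_hat_unique by blast
  qed
  then show ?thesis using ex1 ex2 unfolding wn_def wh_def by blast
qed

theorem mainTheorem5:
  fixes x :: "'M::finite \<Rightarrow> real^'d"
    and \<phi> :: "'N::finite \<Rightarrow> real^'d \<Rightarrow> real"
    and \<eta> :: "nat \<Rightarrow> real"
  assumes "inj x"
    and "rank (design_matrix x \<phi>) = CARD('N)"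
    and "\<And>n. 0 < \<eta> n"
    and "decseq \<eta>"
    and "\<eta> \<longlonglongrightarrow> 0"
  shows "(\<forall>n. \<exists>!w. is_minimizer_on (Eeta (design_matrix x \<phi>) (\<eta> n)) nonneg_orthant w)
    \<and> (\<exists>!wh. wh \<in> Sset (design_matrix x \<phi>) \<and>
          (\<forall>w\<in>Sset (design_matrix x \<phi>).
             (norm (orth_proj (Kspace (design_matrix x \<phi>)) wh))\<^sup>2
               \<le> (norm (orth_proj (Kspace (design_matrix x \<phi>)) w))\<^sup>2))
    \<and> (\<lambda>n. THE w. is_minimizer_on (Eeta (design_matrix x \<phi>) (\<eta> n)) nonneg_orthant w)
        \<longlonglongrightarrow> (THE wh. wh \<in> Sset (design_matrix x \<phi>) \<and>
          (\<forall>w\<in>Sset (design_matrix x \<phi>).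
             (norm (orth_proj (Kspace (design_matrix x \<phi>)) wh))\<^sup>2
               \<le> (norm (orth_proj (Kspace (design_matrix x \<phi>)) w))\<^sup>2))"
proof -
  have inj: "inj ((*v) (design_matrix x \<phi>))" using assms(2) full_rank_injective by blast
  show ?thesis by (rule main_V[OF inj assms(3,4,5)])
qed

end
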